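(* For any $i$, the set $B_\rho\cap([x_{i-1},x_i]\times[0,|Q|])$ consists of $O(m)$ axis-parallel rectangles whose vertical boundaries lie on the vertical lines $\Lambda_{i-1}=\{x_{i-1}\}\times[0,|Q|]$ and $\Lambda_i=\{x_i\}\times[0,|Q|]$.
   Context: Semi-discrete setting: $P$ and $Q$ are polygonal curves in $\mathbb{R}^d$ with $n$ and $m$ vertices, $\rho\in\mathbb{R}$. Let $Q(y)$ denote the point of $Q$ at arc length $y\in[0,|Q|]$. Let $x_i$ be the arc length of $P$ up to its $i$-th vertex. The hiker moves discretely along $P$: during each time interval $[x_{i-1},x_i]$ it stands at a single fixed vertex of $P$; let $h(x)$ denote its position at time $x\in[0,|P|]$. The Barkable Space Diagram is $[0,|P|]\times[0,|Q|]$, with $\mathrm{BSD}[x,y]=\theta_\rho(h(x),Q(y))$, where $\theta_\rho(p,q)=1$ if the Euclidean distance exceeds $\rho$ and $0$ otherwise. The obstacle set is $B_\rho=\{(x,y):\mathrm{BSD}[x,y]=1\}$. *)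

theory Defs
  imports "HOL-Analysis.Analysis"
begin

text \<open>A polygonal curve is given by its list of vertices (0-indexed).
  arc_len vs k is the arc length of the curve up to its k-th vertex.\<close>

definition arc_len :: "'a::euclidean_space list \<Rightarrow> nat \<Rightarrow> real" where
  "arc_len vs k = (\<Sum>j<k. dist (vs ! j) (vs ! Suc j))"

definition curve_len :: "'a::euclidean_space list \<Rightarrow> real" where
  "curve_len vs = arc_len vs (length vs - 1)"

text \<open>The point of the curve at arc length y (for y in [0, curve_len vs]).
  Degenerate (zero-length) edges are skipped.\<close>

definition point_at :: "'a::euclidean_space list \<Rightarrow> real \<Rightarrow> 'a" where
  "point_at vs y =
     (if \<exists>k. Suc k < length vs \<and> arc_len vs k \<le> y \<and> y \<le> arc_len vs (Suc k)
              \<and> dist (vs ! k) (vs ! Suc k) > 0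
      then (let k = (LEAST k. Suc k < length vs \<and> arc_len vs k \<le> y \<and> y \<le> arc_len vs (Suc k)
                            \<and> dist (vs ! k) (vs ! Suc k) > 0)
            in vs ! k + ((y - arc_len vs k) / dist (vs ! k) (vs ! Suc k)) *\<^sub>R (vs ! Suc k - vs ! k))
      else vs ! 0)"

definition theta :: "real \<Rightarrow> 'a::euclidean_space \<Rightarrow> 'a \<Rightarrow> nat" where
  "theta \<rho> p q = (if dist p q > \<rho> then 1 else 0)"

text \<open>Barkable space diagram for hiker position function h (time = arc length along P)
  and curve Q given by vertex list qs.\<close>

definition BSD :: "(real \<Rightarrow> 'a::euclidean_space) \<Rightarrow> 'a list \<Rightarrow> real \<Rightarrow> real \<Rightarrow> real \<Rightarrow> nat" where
  "BSD h qs \<rho> x y = theta \<rho> (h x) (point_at qs y)"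

definition obstacle_set :: "'a::euclidean_space list \<Rightarrow> (real \<Rightarrow> 'a) \<Rightarrow> 'a list \<Rightarrow> real \<Rightarrow> (real \<times> real) set" where
  "obstacle_set ps h qs \<rho> =
     {(x, y). x \<in> {0..curve_len ps} \<and> y \<in> {0..curve_len qs} \<and> BSD h qs \<rho> x y = 1}"

end

theory Submission imports Defs begin

lemma comp_lemma:
  fixes S :: "real set"
  assumes F: "finite F" "\<forall>f\<in>F. is_interval f" "\<Union>F = S"
  shows "\<exists>R. finite R \<and> card R \<le> card F \<and> pairwise disjnt R \<and>
     (\<forall>r\<in>R. is_interval r \<and> r \<noteq> {}) \<and> \<Union>R = S"
proof -
  have ex: "\<forall>c\<in>components S. \<exists>f. f \<in> F \<and> f \<noteq> {} \<and> f \<subseteq> c"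
  proof
    fix c assume c: "c \<in> components S"
    then obtain x where x: "x \<in> c" using in_components_nonempty by blast
    then have "x \<in> S" using c in_components_subset by blast
    then obtain f where f: "f \<in> F" "x \<in> f" using F by blast
    have "f \<subseteq> c"
    proof (rule components_maximal[OF c])
      show "connected f" using f(1) F(2) is_interval_connected_1 by blast
      show "f \<subseteq> S" using f(1) F(3) by blast
      show "c \<inter> f \<noteq> {}" using x f(2) by blast
    qed
    then show "\<exists>f. f \<in> F \<and> f \<noteq> {} \<and> f \<subseteq> c" using f by blast
  qed
  then obtain g where g: "\<forall>c\<in>components S. g c \<in> F \<and> g c \<noteq> {} \<and> g c \<subseteq> c"
    using bchoice[OF ex] by blast
  have inj: "inj_on g (components S)"
  proof (rule inj_onI)
    fix c d assume cd: "c \<in> components S" "d \<in> components S" "g c = g d"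
    have "g c \<subseteq> c" "g d \<subseteq> d" "g c \<noteq> {}" using g cd(1,2) by auto
    then have "c \<inter> d \<noteq> {}" using cd(3) by auto
    then show "c = d" using pairwise_disjoint_components[of S] cd(1,2) unfolding pairwise_def by auto
  qed
  have sub: "g ` components S \<subseteq> F" using g by blast
  have "finite (g ` components S)" using sub F(1) by (rule finite_subset)
  then have fin: "finite (components S)" using inj by (rule finite_imageD)
  have "card (components S) \<le> card F"
    using card_inj_on_le[OF inj sub F(1)] .
  moreover have "pairwise disjnt (components S)"
    using pairwise_disjoint_components[of S] unfolding pairwise_def disjnt_def by blast
  moreover have "\<forall>r\<in>components S. is_interval r \<and> r \<noteq> {}"
    using in_components_nonempty in_components_connected is_interval_connected_1 by blast
  ultimately show ?thesis using fin Union_components[of S] by (intro exI[of _ "components S"]) simp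
qed

lemma arc_len_Suc: "arc_len vs (Suc k) = arc_len vs k + dist (vs!k) (vs!Suc k)"
  by (simp add: arc_len_def)

lemma arc_len_mono: "j \<le> k \<Longrightarrow> arc_len vs j \<le> arc_len vs k"
proof (induction k)
  case 0 then show ?case by simp
next
  case (Suc k)
  show ?case
  proof (cases "j = Suc k")
    case True then show ?thesis by simp
  next
    case False
    then have "arc_len vs j \<le> arc_len vs k" using Suc by simp
    then show ?thesis using arc_len_Suc[of vs k] zero_le_dist[of "vs!k" "vs!Suc k"] by linarith
  qed
qed

lemma arc_len_0: "arc_len vs 0 = 0" by (simp add: arc_len_def)

lemma arc_len_nonneg: "0 \<le> arc_len vs k"
  by (simp add: arc_len_def sum_nonneg)

lemma cover:
  assumes "0 \<le> y" "y \<le> arc_len vs n" "arc_len vs n > 0" "n < length vs"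
  shows "\<exists>k. Suc k < length vs \<and> arc_len vs k \<le> y \<and> y \<le> arc_len vs (Suc k)
              \<and> dist (vs ! k) (vs ! Suc k) > 0"
  using assms
proof (induction n)
  case 0 then show ?case by (simp add: arc_len_0)
next
  case (Suc n)
  show ?case
  proof (cases "y \<le> arc_len vs n \<and> arc_len vs n > 0")
    case True
    have "n < length vs" using Suc.prems by simp
    then show ?thesis using Suc.IH Suc.prems(1) True by blast
  next
    case False
    then have "y > arc_len vs n \<or> arc_len vs n = 0" using arc_len_nonneg[of vs n] by auto
    then have "arc_len vs n \<le> y \<and> arc_len vs (Suc n) > arc_len vs n"
      using Suc.prems by auto
    moreover have "Suc n < length vs" using Suc.prems by simp
    moreover have "y \<le> arc_len vs (Suc n)" using Suc.prems by simp
    moreover have "dist (vs ! n) (vs ! Suc n) > 0" using calculation arc_len_Suc[of vs n] by linarith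
    ultimately show ?thesis by blast
  qed
qed

lemma convex_K:
  fixes p W v :: "'a::euclidean_space"
  shows "is_interval {y::real. dist v (p + ((y - a) / d) *\<^sub>R W) \<le> \<rho>}"
  unfolding is_interval_convex_1
proof (rule convexI)
  fix x y u w :: real
  assume x: "x \<in> {y::real. dist v (p + ((y - a) / d) *\<^sub>R W) \<le> \<rho>}"
    and y: "y \<in> {y::real. dist v (p + ((y - a) / d) *\<^sub>R W) \<le> \<rho>}"
    and uw: "0 \<le> u" "0 \<le> w" "u + w = 1"
  have e1: "u*x + w*y - a = u*(x-a) + w*(y-a)"
  proof -
    have "u*x + w*y - a = u*x + w*y - (u+w)*a" using uw(3) by simp
    also have "\<dots> = u*(x-a) + w*(y-a)" by (simp add: algebra_simps)
    finally show ?thesis .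
  qed
  have e2: "(u*x + w*y - a)/d = u*((x-a)/d) + w*((y-a)/d)"
    unfolding e1 by (simp add: add_divide_distrib)
  have e3: "p + ((u*x + w*y - a)/d) *\<^sub>R W = u *\<^sub>R (p + ((x - a) / d) *\<^sub>R W) + w *\<^sub>R (p + ((y - a) / d) *\<^sub>R W)"
  proof -
    have "u *\<^sub>R (p + ((x - a) / d) *\<^sub>R W) + w *\<^sub>R (p + ((y - a) / d) *\<^sub>R W)
       = (u + w) *\<^sub>R p + (u*((x-a)/d) + w*((y-a)/d)) *\<^sub>R W"
      by (simp add: algebra_simps)
    then show ?thesis unfolding e2 using uw(3) by simp
  qed
  have cv: "convex (cball v \<rho>)" by simp
  have m1: "p + ((x - a) / d) *\<^sub>R W \<in> cball v \<rho>" and m2: "p + ((y - a) / d) *\<^sub>R W \<in> cball v \<rho>"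
    using x y by auto
  have "u *\<^sub>R (p + ((x - a) / d) *\<^sub>R W) + w *\<^sub>R (p + ((y - a) / d) *\<^sub>R W) \<in> cball v \<rho>"
    using convexD[OF cv m1 m2 uw] .
  then show "u *\<^sub>R x + w *\<^sub>R y \<in> {y::real. dist v (p + ((y - a) / d) *\<^sub>R W) \<le> \<rho>}"
    using e3 by simp
qed

definition cnd :: "'a::euclidean_space list \<Rightarrow> real \<Rightarrow> nat \<Rightarrow> bool" where
  "cnd qs y k \<longleftrightarrow> Suc k < length qs \<and> arc_len qs k \<le> y \<and> y \<le> arc_len qs (Suc k)
              \<and> dist (qs ! k) (qs ! Suc k) > 0"

lemma A_interval:
  fixes qs :: "'a::euclidean_space list"
  shows "is_interval {y. (\<exists>k. cnd qs y k) \<and> (LEAST k. cnd qs y k) = k}"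
  unfolding is_interval_1
proof (intro ballI allI impI)
  fix a b x
  assume a: "a \<in> {y. (\<exists>k. cnd qs y k) \<and> (LEAST k. cnd qs y k) = k}"
    and b: "b \<in> {y. (\<exists>k. cnd qs y k) \<and> (LEAST k. cnd qs y k) = k}" and x: "a \<le> x \<and> x \<le> b"
  have ca: "cnd qs a k" using a LeastI_ex[of "cnd qs a"] by auto
  have cb: "cnd qs b k" using b LeastI_ex[of "cnd qs b"] by auto
  have cx: "cnd qs x k" using ca cb x unfolding cnd_def by auto
  have le: "(LEAST k. cnd qs x k) \<le> k" using cx by (rule Least_le)
  have "(LEAST k. cnd qs x k) = k"
  proof (rule ccontr)
    assume ne: "(LEAST k. cnd qs x k) \<noteq> k"
    define k' where "k' = (LEAST k. cnd qs x k)"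
    have lt: "k' < k" using le ne k'_def by simp
    have ck': "cnd qs x k'" using cx LeastI[of "cnd qs x"] k'_def by simp
    have "arc_len qs (Suc k') \<le> arc_len qs k" using lt by (simp add: arc_len_mono)
    then have "x \<le> a" using ck' ca unfolding cnd_def by linarith
    then have "x = a" using x by simp
    then have "cnd qs a k'" using ck' by simp
    then have "(LEAST k. cnd qs a k) \<le> k'" by (rule Least_le)
    then show False using a lt by simp
  qed
  then show "x \<in> {y. (\<exists>k. cnd qs y k) \<and> (LEAST k. cnd qs y k) = k}" using cx by auto
qed

lemma point_at_A:
  fixes qs :: "'a::euclidean_space list"
  assumes "\<exists>k. cnd qs y k" "(LEAST k. cnd qs y k) = k"
  shows "point_at qs y = qs ! k + ((y - arc_len qs k) / dist (qs ! k) (qs ! Suc k)) *\<^sub>R (qs ! Suc k - qs ! k)"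
proof -
  have "point_at qs y = (let k = (LEAST k. cnd qs y k)
            in qs ! k + ((y - arc_len qs k) / dist (qs ! k) (qs ! Suc k)) *\<^sub>R (qs ! Suc k - qs ! k))"
    using assms(1) unfolding point_at_def cnd_def by simp
  then show ?thesis using assms(2) by simp
qed

lemma point_at_E:
  fixes qs :: "'a::euclidean_space list"
  assumes "\<not> (\<exists>k. cnd qs y k)"
  shows "point_at qs y = qs ! 0"
proof -
  have nc: "\<not> (\<exists>k. Suc k < length qs \<and> arc_len qs k \<le> y \<and> y \<le> arc_len qs (Suc k)
              \<and> dist (qs ! k) (qs ! Suc k) > 0)" using assms(1) unfolding cnd_def .
  show ?thesis unfolding point_at_def by (rule if_not_P[OF nc])
qed

lemma not_interval_split:
  fixes K :: "real set"
  assumes "is_interval K" "y \<notin> K"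
  shows "(\<forall>c\<in>K. y < c) \<or> (\<forall>c\<in>K. c < y)"
proof (rule ccontr)
  assume "\<not> ?thesis"
  then obtain c1 c2 where "c1 \<in> K" "c2 \<in> K" "c1 \<le> y" "y \<le> c2" by (auto simp: not_less)
  then have "y \<in> K" using assms(1) unfolding is_interval_1 by blast
  then show False using assms(2) by simp
qed

lemma yset:
  fixes qs :: "'a::euclidean_space list" and v :: 'a and \<rho> :: real
  assumes n1: "1 \<le> length qs"
  shows "\<exists>R. finite R \<and> card R \<le> 2 * length qs \<and> pairwise disjnt R \<and>
     (\<forall>r\<in>R. is_interval r \<and> r \<noteq> {}) \<and>
     \<Union>R = {y \<in> {0..curve_len qs}. dist v (point_at qs y) > \<rho>}"
proof -
  define L where "L = curve_len qs"
  define A where "A = (\<lambda>k. {y. (\<exists>k. cnd qs y k) \<and> (LEAST k. cnd qs y k) = k})"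
  define f where "f = (\<lambda>k y. qs ! k + ((y - arc_len qs k) / dist (qs ! k) (qs ! Suc k)) *\<^sub>R (qs ! Suc k - qs ! k))"
  define K where "K = (\<lambda>k. {y. dist v (f k y) \<le> \<rho>})"
  define Lo where "Lo = (\<lambda>k. {0..L} \<inter> A k \<inter> {y. \<forall>c\<in>K k. y < c})"
  define Hi where "Hi = (\<lambda>k. {0..L} \<inter> A k \<inter> {y. \<forall>c\<in>K k. c < y})"
  define E where "E = {y \<in> {0..L}. \<not> (\<exists>k. cnd qs y k) \<and> dist v (qs ! 0) > \<rho>}"
  define F where "F = Lo ` {..<length qs - 1} \<union> Hi ` {..<length qs - 1} \<union> {E}"
  have Kint: "is_interval (K k)" for k
    unfolding K_def f_def by (rule convex_K)
  have Aint: "is_interval (A k)" for k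
    unfolding A_def by (rule A_interval)
  have half: "is_interval {y::real. \<forall>c\<in>C. y < c}" "is_interval {y::real. \<forall>c\<in>C. c < y}" for C
    unfolding is_interval_1 by force+
  have Loint: "is_interval (Lo k)" for k
    unfolding Lo_def by (intro is_interval_Int Aint half is_interval_cc)
  have Hiint: "is_interval (Hi k)" for k
    unfolding Hi_def by (intro is_interval_Int Aint half is_interval_cc)
  have Eint: "is_interval E"
  proof (cases "L > 0")
    case True
    have "E = {}"
    proof (rule ccontr)
      assume "E \<noteq> {}"
      then obtain y where y: "y \<in> E" by auto
      then have "0 \<le> y" "y \<le> arc_len qs (length qs - 1)" "\<not> (\<exists>k. cnd qs y k)"
        unfolding E_def L_def curve_len_def by auto
      moreover have "arc_len qs (length qs - 1) > 0" using True unfolding L_def curve_len_def .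
      moreover have "length qs - 1 < length qs" using n1 by simp
      ultimately show False using cover[of y qs "length qs - 1"] unfolding cnd_def by blast
    qed
    then show ?thesis by simp
  next
    case False
    have sub: "E \<subseteq> {0}" unfolding E_def using False by auto
    show ?thesis unfolding is_interval_1
    proof (intro ballI allI impI)
      fix a b x assume ab: "a \<in> E" "b \<in> E" "a \<le> x \<and> x \<le> b"
      then have "a = 0" "b = 0" using sub by auto
      then have "x = a" using ab(3) by simp
      then show "x \<in> E" using ab(1) by simp
    qed
  qed
  have finF: "finite F" unfolding F_def by simp
  have cardF: "card F \<le> 2 * length qs"
  proof -
    have "card F \<le> card (Lo ` {..<length qs - 1} \<union> Hi ` {..<length qs - 1}) + card {E}"
      unfolding F_def by (rule card_Un_le)
    also have "\<dots> \<le> card (Lo ` {..<length qs - 1}) + card (Hi ` {..<length qs - 1}) + 1"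
      using card_Un_le[of "Lo ` {..<length qs - 1}" "Hi ` {..<length qs - 1}"] by simp
    also have "\<dots> \<le> (length qs - 1) + (length qs - 1) + 1"
      using card_image_le[of "{..<length qs - 1}" Lo] card_image_le[of "{..<length qs - 1}" Hi] by simp
    also have "\<dots> \<le> 2 * length qs" using n1 by simp
    finally show ?thesis .
  qed
  have allint: "\<forall>g\<in>F. is_interval g" unfolding F_def using Loint Hiint Eint by auto
  have UF: "\<Union>F = {y \<in> {0..curve_len qs}. dist v (point_at qs y) > \<rho>}"
  proof (rule set_eqI)
    fix y
    show "y \<in> \<Union>F \<longleftrightarrow> y \<in> {y \<in> {0..curve_len qs}. dist v (point_at qs y) > \<rho>}"
    proof (cases "\<exists>k. cnd qs y k")
      case True
      define k where "k = (LEAST k. cnd qs y k)"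
      have ck: "cnd qs y k" using True LeastI_ex[of "cnd qs y"] k_def by simp
      then have "Suc k < length qs" unfolding cnd_def by simp
      then have klt: "k < length qs - 1" by linarith
      have yA: "y \<in> A k" unfolding A_def using True k_def by simp
      have pa: "point_at qs y = f k y" unfolding f_def using point_at_A[OF True k_def[symmetric]] .
      have inA: "y \<in> A j \<Longrightarrow> j = k" for j unfolding A_def k_def by simp
      have notE: "y \<notin> E" unfolding E_def using True by simp
      show ?thesis
      proof
        assume "y \<in> \<Union>F"
        then obtain g where g: "g \<in> F" "y \<in> g" by auto
        then have "(\<exists>j. g = Lo j) \<or> (\<exists>j. g = Hi j)" unfolding F_def using notE by auto
        then obtain j where gj: "g = Lo j \<or> g = Hi j" by blast
        have y0L: "y \<in> {0..L}" and yj: "y \<in> A j" and yK: "y \<notin> K j"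
          using gj g(2) unfolding Lo_def Hi_def by auto
        have "j = k" using inA yj .
        then have "dist v (point_at qs y) > \<rho>" using yK pa unfolding K_def by auto
        then show "y \<in> {y \<in> {0..curve_len qs}. dist v (point_at qs y) > \<rho>}" using y0L L_def by simp
      next
        assume y: "y \<in> {y \<in> {0..curve_len qs}. dist v (point_at qs y) > \<rho>}"
        then have "y \<notin> K k" unfolding K_def using pa by auto
        then have "(\<forall>c\<in>K k. y < c) \<or> (\<forall>c\<in>K k. c < y)" using not_interval_split Kint by blast
        then have "y \<in> Lo k \<or> y \<in> Hi k" unfolding Lo_def Hi_def using yA y L_def by auto
        moreover have "Lo k \<in> F" "Hi k \<in> F" unfolding F_def using klt by auto
        ultimately show "y \<in> \<Union>F" by blast
      qed
    next
      case False
      have pe: "point_at qs y = qs ! 0" using point_at_E[OF False] .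
      have nA: "y \<notin> A j" for j unfolding A_def using False by simp
      show ?thesis
      proof
        assume "y \<in> \<Union>F"
        then obtain g where g: "g \<in> F" "y \<in> g" by auto
        then have "g = E" unfolding F_def Lo_def Hi_def using nA by auto
        then show "y \<in> {y \<in> {0..curve_len qs}. dist v (point_at qs y) > \<rho>}"
          using g(2) pe unfolding E_def L_def by simp
      next
        assume "y \<in> {y \<in> {0..curve_len qs}. dist v (point_at qs y) > \<rho>}"
        then have "y \<in> E" unfolding E_def L_def using pe False by simp
        then show "y \<in> \<Union>F" unfolding F_def by simp
      qed
    qed
  qed
  obtain R where "finite R \<and> card R \<le> card F \<and> pairwise disjnt R \<and>
     (\<forall>r\<in>R. is_interval r \<and> r \<noteq> {}) \<and> \<Union>R = {y \<in> {0..curve_len qs}. dist v (point_at qs y) > \<rho>}"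
    using comp_lemma[OF finF allint UF] by blast
  then show ?thesis using cardF by (intro exI[of _ R]) simp
qed

theorem mainTheorem5:
  "\<exists>C::nat. \<forall>(ps::'a::euclidean_space list) (qs::'a list) (\<rho>::real) (h::real \<Rightarrow> 'a) (i::nat).
     1 \<le> length qs \<and> 1 \<le> i \<and> i < length ps \<and>
     (\<exists>v\<in>set ps. \<forall>x\<in>{arc_len ps (i - 1)..arc_len ps i}. h x = v)
     \<longrightarrow> (\<exists>R. finite R \<and> card R \<le> C * length qs \<and> pairwise disjnt R \<and>
           (\<forall>r\<in>R. \<exists>J. is_interval J \<and> J \<noteq> {} \<and> r = {arc_len ps (i - 1)..arc_len ps i} \<times> J) \<and>
           \<Union>R = obstacle_set ps h qs \<rho> \<inter> ({arc_len ps (i - 1)..arc_len ps i} \<times> {0..curve_len qs}))"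
proof (intro exI[of _ 2] allI impI)
  fix ps qs :: "'a list" and \<rho> :: real and h :: "real \<Rightarrow> 'a" and i :: nat
  assume H: "1 \<le> length qs \<and> 1 \<le> i \<and> i < length ps \<and>
     (\<exists>v\<in>set ps. \<forall>x\<in>{arc_len ps (i - 1)..arc_len ps i}. h x = v)"
  define a where "a = arc_len ps (i - 1)"
  define b where "b = arc_len ps i"
  obtain v where hv: "\<forall>x\<in>{a..b}. h x = v" using H unfolding a_def b_def by blast
  have ab: "a \<le> b" unfolding a_def b_def by (rule arc_len_mono) simp
  have a0: "0 \<le> a" unfolding a_def by (rule arc_len_nonneg)
  have "i \<le> length ps - 1" using H by linarith
  then have bL: "b \<le> curve_len ps" unfolding b_def curve_len_def by (rule arc_len_mono)
  define Y where "Y = {y \<in> {0..curve_len qs}. dist v (point_at qs y) > \<rho>}"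
  obtain R where R: "finite R" "card R \<le> 2 * length qs" "pairwise disjnt R"
     "\<forall>r\<in>R. is_interval r \<and> r \<noteq> {}" "\<Union>R = Y"
    using yset[where qs=qs and v=v and \<rho>=\<rho>] H unfolding Y_def by blast
  define R' where "R' = (\<lambda>J. {a..b} \<times> J) ` R"
  have "finite R'" unfolding R'_def using R(1) by simp
  moreover have "card R' \<le> 2 * length qs"
    unfolding R'_def using card_image_le[OF R(1), of "\<lambda>J. {a..b} \<times> J"] R(2) by linarith
  moreover have "pairwise disjnt R'"
    unfolding R'_def pairwise_def
  proof (intro ballI impI)
    fix r s assume r: "r \<in> (\<lambda>J. {a..b} \<times> J) ` R" and s: "s \<in> (\<lambda>J. {a..b} \<times> J) ` R" and ne: "r \<noteq> s"
    obtain J1 where J1: "J1 \<in> R" "r = {a..b} \<times> J1" using r by auto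
    obtain J2 where J2: "J2 \<in> R" "s = {a..b} \<times> J2" using s by auto
    have "J1 \<noteq> J2" using ne J1 J2 by auto
    then have "disjnt J1 J2" using R(3) J1(1) J2(1) unfolding pairwise_def by auto
    then show "disjnt r s" using J1(2) J2(2) unfolding disjnt_def by auto
  qed
  moreover have "\<forall>r\<in>R'. \<exists>J. is_interval J \<and> J \<noteq> {} \<and> r = {a..b} \<times> J"
    unfolding R'_def using R(4) by auto
  moreover have "\<Union>R' = obstacle_set ps h qs \<rho> \<inter> ({a..b} \<times> {0..curve_len qs})"
  proof -
    have "\<Union>R' = {a..b} \<times> Y" unfolding R'_def R(5)[symmetric] by auto
    also have "\<dots> = obstacle_set ps h qs \<rho> \<inter> ({a..b} \<times> {0..curve_len qs})"
    proof (rule set_eqI)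
      fix z :: "real \<times> real"
      obtain x y where z: "z = (x, y)" by (cases z)
      show "z \<in> {a..b} \<times> Y \<longleftrightarrow> z \<in> obstacle_set ps h qs \<rho> \<inter> ({a..b} \<times> {0..curve_len qs})"
      proof (cases "x \<in> {a..b}")
        case True
        then have "h x = v" using hv by simp
        moreover have "x \<in> {0..curve_len ps}" using True a0 bL by auto
        ultimately show ?thesis using True unfolding z Y_def obstacle_set_def BSD_def theta_def by auto
      next
        case False
        then show ?thesis unfolding z by auto
      qed
    qed
    finally show ?thesis .
  qed
  ultimately show "\<exists>R. finite R \<and> card R \<le> 2 * length qs \<and> pairwise disjnt R \<and>
           (\<forall>r\<in>R. \<exists>J. is_interval J \<and> J \<noteq> {} \<and> r = {arc_len ps (i - 1)..arc_len ps i} \<times> J) \<and>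
           \<Union>R = obstacle_set ps h qs \<rho> \<inter> ({arc_len ps (i - 1)..arc_len ps i} \<times> {0..curve_len qs})"
    unfolding a_def b_def by blast
qed

end
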